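(* Consider the asynchronous $(n,k)$ game on the complete graph with agent set $[n]$ consisting of $n_r$ rejectors, $n_c$ consentors and at least two majority followers, with threshold $n_c<k\le n-n_r$. Let $T=\inf\{t\ge0:\ x_i(t)=x_i(s)\text{ for all } i\in[n]\text{ and all } s\ge t\}$. Then on the event that a decision is never made in finite time (i.e. $\sum_{i\in[n]}x_i(t)<k$ for all $t\ge0$), all majority followers hold opinion $0$ at time $T$.
   Context: Each agent $i\in[n]$ holds an opinion $x_i(t)\in\{0,1\}$ at time $t=0,1,2,\dots$. The social graph is complete: every agent's social neighbors are all the other $n-1$ agents. In the $(n,k)$ game a decision is made at time $t$ if $\sum_{i\in[n]}x_i(t)\ge k$. The game is asynchronous: at each time step a single agent, chosen uniformly at random from $[n]$ (independently of the past), updates its opinion, and all other opinions stay the same. A rejector holds opinion $0$ at all times; a consentor holds opinion $1$ at all times. A majority follower has initial opinion distributed as Bernoulli$(1/2)$ (independently across agents), and when it updates it adopts the majority opinion among its social neighbors (the other $n-1$ agents). *)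

theory Defs
  imports "HOL-Probability.Probability"
begin

text \<open>Agents are 0,...,n-1; an opinion profile is a map nat => bool (True = opinion 1).
  R = rejectors, C = consentors, F = majority followers.\<close>

definition ones :: "nat \<Rightarrow> (nat \<Rightarrow> bool) \<Rightarrow> nat" where
  "ones n x = card {i. i < n \<and> x i}"

definition majority_update :: "nat \<Rightarrow> (nat \<Rightarrow> bool) \<Rightarrow> nat \<Rightarrow> bool" where
  "majority_update n x i =
     (let c = card {j. j < n \<and> j \<noteq> i \<and> x j}
      in if 2 * c > n - 1 then True else if 2 * c < n - 1 then False else x i)"

definition game_step :: "nat \<Rightarrow> nat set \<Rightarrow> nat set \<Rightarrow> (nat \<Rightarrow> bool) \<Rightarrow> nat \<Rightarrow> (nat \<Rightarrow> bool)" where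
  "game_step n R C x i =
     x(i := (if i \<in> R then False else if i \<in> C then True else majority_update n x i))"

definition init_profile :: "nat set \<Rightarrow> nat set \<Rightarrow> (nat \<Rightarrow> bool) \<Rightarrow> (nat \<Rightarrow> bool)" where
  "init_profile R C b = (\<lambda>i. if i \<in> R then False else if i \<in> C then True else b i)"

fun opinions :: "nat \<Rightarrow> nat set \<Rightarrow> nat set \<Rightarrow> (nat \<Rightarrow> bool) \<Rightarrow> nat stream \<Rightarrow> nat \<Rightarrow> (nat \<Rightarrow> bool)" where
  "opinions n R C b s 0 = init_profile R C b"
| "opinions n R C b s (Suc t) = game_step n R C (opinions n R C b s t) (s !! t)"

text \<open>Set of times after which no opinion changes any more; T is its infimum.\<close>
definition stable_times :: "nat \<Rightarrow> (nat \<Rightarrow> nat \<Rightarrow> bool) \<Rightarrow> nat set" where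
  "stable_times n x = {t. \<forall>i<n. \<forall>s\<ge>t. x s i = x t i}"

definition game_space :: "nat \<Rightarrow> nat set \<Rightarrow> ((nat \<Rightarrow> bool) \<times> nat stream) measure" where
  "game_space n F = pair_measure (PiM F (\<lambda>_. measure_pmf (bernoulli_pmf (1/2))))
                                 (stream_space (measure_pmf (pmf_of_set {..<n})))"

end

theory Submission
  imports Defs
begin


context
  fixes n :: nat and R C F :: "nat set" and b :: "nat \<Rightarrow> bool" and s :: "nat stream"
  assumes part: "R \<union> C \<union> F = {..<n}"
    and dRC: "R \<inter> C = {}" and dRF: "R \<inter> F = {}" and dCF: "C \<inter> F = {}"
begin

abbreviation "xx \<equiv> opinions n R C b s"

lemma R_false: "i \<in> R \<Longrightarrow> \<not> xx t i"
  by (induction t) (auto simp: game_step_def init_profile_def)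

lemma C_true: "i \<in> C \<Longrightarrow> xx t i"
  using dRC by (induction t) (auto simp: game_step_def init_profile_def)

lemma other: "j \<noteq> s!!t \<Longrightarrow> xx (Suc t) j = xx t j"
  by (simp add: game_step_def)

lemma card_others:
  assumes "i < n"
  shows "card {j. j < n \<and> j \<noteq> i \<and> y j} = ones n y - (if y i then 1 else 0)"
proof -
  have "{j. j < n \<and> j \<noteq> i \<and> y j} = {j. j < n \<and> y j} - {i}" by auto
  then show ?thesis using assms by (simp add: ones_def card_Diff_singleton_if)
qed

lemma ones_pos: "i < n \<Longrightarrow> y i \<Longrightarrow> ones n y \<ge> 1"
  unfolding ones_def
proof -
  assume a: "i < n" "y i"
  have "{j. j < n \<and> y j} \<noteq> {}" using a by auto
  moreover have "finite {j. j < n \<and> y j}" by simp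
  ultimately have "card {j. j < n \<and> y j} > 0" by (simp add: card_gt_0_iff)
  then show "card {j. j < n \<and> y j} \<ge> 1" by simp
qed

lemma Fstep:
  assumes "s!!t \<in> F"
  shows "xx (Suc t) (s!!t) = (if xx t (s!!t) then 2 * ones n (xx t) \<ge> n+1 else 2 * ones n (xx t) \<ge> n)"
proof -
  let ?i = "s!!t"
  have i: "?i < n" "?i \<notin> R" "?i \<notin> C" using assms part dRF dCF by auto
  have c: "card {j. j < n \<and> j \<noteq> ?i \<and> xx t j} = ones n (xx t) - (if xx t ?i then 1 else 0)"
    using card_others[OF i(1)] .
  show ?thesis
  proof (cases "xx t ?i")
    case True
    have "ones n (xx t) \<ge> 1" using ones_pos[OF i(1)] True by blast
    then show ?thesis using True i c by (auto simp: game_step_def majority_update_def Let_def)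
  next
    case False
    then show ?thesis using i c by (auto simp: game_step_def majority_update_def Let_def)
  qed
qed

lemma up_step:
  assumes "2 * ones n (xx t) \<ge> n+1"
  shows "(\<forall>j<n. xx t j \<longrightarrow> xx (Suc t) j) \<and> (s!!t \<in> F \<longrightarrow> xx (Suc t) (s!!t))"
proof -
  have "xx (Suc t) j" if "j < n" "xx t j \<or> (j = s!!t \<and> j \<in> F)" for j
  proof (cases "j = s!!t")
    case True
    show ?thesis
    proof (cases "j \<in> F")
      case True
      then show ?thesis using Fstep[of t] \<open>j = s!!t\<close> assms by auto
    next
      case False
      then have "j \<in> R \<or> j \<in> C" using part that by auto
      then show ?thesis using R_false C_true that False by blast
    qed
  qed (use other that in auto)
  then show ?thesis using part by auto
qed

lemma down_step:
  assumes "2 * ones n (xx t) \<le> n - 1" and "n \<ge> 1"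
  shows "(\<forall>j<n. xx (Suc t) j \<longrightarrow> xx t j) \<and> (s!!t \<in> F \<longrightarrow> \<not> xx (Suc t) (s!!t))"
proof -
  have F: "\<not> xx (Suc t) (s!!t)" if "s!!t \<in> F"
    using Fstep[OF that] assms by auto
  have "xx t j" if "j < n" "xx (Suc t) j" for j
  proof (cases "j = s!!t")
    case True
    show ?thesis
    proof (cases "j \<in> F")
      case True
      then show ?thesis using F \<open>j = s!!t\<close> that by auto
    next
      case False
      then have "j \<in> R \<or> j \<in> C" using part that by auto
      then show ?thesis using R_false C_true that False by blast
    qed
  qed (use other that in auto)
  then show ?thesis using F by auto
qed

lemma ones_mono: "(\<forall>j<n. y j \<longrightarrow> z j) \<Longrightarrow> ones n y \<le> ones n z"
  unfolding ones_def by (rule card_mono) auto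

lemma ones_le: "ones n y \<le> n"
  unfolding ones_def
  using card_mono[of "{..<n}" "{i. i < n \<and> y i}"] by auto

lemma up_persist:
  assumes "2 * ones n (xx t0) \<ge> n+1" "t0 \<le> t"
  shows "2 * ones n (xx t) \<ge> n+1"
  using assms(2)
proof (induction rule: dec_induct)
  case base then show ?case using assms(1) .
next
  case (step m)
  have "ones n (xx m) \<le> ones n (xx (Suc m))" using up_step[OF step.IH] by (intro ones_mono) blast
  then show ?case using step.IH by linarith
qed

lemma up_mono:
  assumes "2 * ones n (xx t0) \<ge> n+1" "t0 \<le> t" "t \<le> t'"
  shows "\<forall>j<n. xx t j \<longrightarrow> xx t' j"
  using assms(3)
proof (induction rule: dec_induct)
  case base then show ?case by simp
next
  case (step m)
  then show ?case using up_step[OF up_persist[OF assms(1), of m]] assms(2) by auto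
qed

lemma down_persist:
  assumes "2 * ones n (xx t0) \<le> n - 1" "n \<ge> 1" "t0 \<le> t"
  shows "2 * ones n (xx t) \<le> n - 1"
  using assms(3)
proof (induction rule: dec_induct)
  case base then show ?case using assms(1) .
next
  case (step m)
  have "ones n (xx (Suc m)) \<le> ones n (xx m)" using down_step[OF step.IH assms(2)] by (intro ones_mono) blast
  then show ?case using step.IH by linarith
qed

lemma down_mono:
  assumes "2 * ones n (xx t0) \<le> n - 1" "n \<ge> 1" "t0 \<le> t" "t \<le> t'"
  shows "\<forall>j<n. xx t' j \<longrightarrow> xx t j"
  using assms(4)
proof (induction rule: dec_induct)
  case base then show ?case by simp
next
  case (step m)
  then show ?case using down_step[OF down_persist[OF assms(1,2), of m] assms(2)] assms(3) by auto
qed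

lemma exists_zero:
  assumes "ones n (xx t) < card C + card F"
  shows "\<exists>i\<in>F. \<not> xx t i"
proof (rule ccontr)
  assume "\<not> ?thesis"
  then have "C \<union> F \<subseteq> {i. i < n \<and> xx t i}" using C_true part by auto
  then have "card (C \<union> F) \<le> ones n (xx t)" unfolding ones_def by (rule card_mono[rotated]) auto
  moreover have "card (C \<union> F) = card C + card F"
    using dCF part by (intro card_Un_disjoint) (auto intro: finite_subset[of _ "{..<n}"])
  ultimately show False using assms by linarith
qed

lemma cardsum: "card R + card C + card F = n"
proof -
  have fin: "finite R" "finite C" "finite F" using part by (auto intro: finite_subset[of _ "{..<n}"])
  have "card (R \<union> C \<union> F) = card (R \<union> C) + card F"
    using fin dRF dCF by (intro card_Un_disjoint) auto
  also have "card (R \<union> C) = card R + card C" using fin dRC by (intro card_Un_disjoint) auto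
  finally show ?thesis using part by simp
qed


lemma ones_strict:
  assumes "\<forall>j<n. y j \<longrightarrow> z j" "i < n" "\<not> y i" "z i"
  shows "ones n y < ones n z"
  unfolding ones_def using assms by (intro psubset_card_mono) auto

lemma main_det:
  assumes io: "\<forall>i<n. \<forall>T. \<exists>t\<ge>T. s!!t = i" and nd: "\<forall>t. ones n (xx t) < k"
    and k: "k \<le> n - card R" and F2: "card F \<ge> 2"
  shows "stable_times n xx \<noteq> {} \<and> (\<forall>i\<in>F. \<not> xx (Inf (stable_times n xx)) i)"
proof -
  have Fsub: "F \<subseteq> {..<n}" using part by auto
  have finF: "finite F" using Fsub finite_subset by blast
  have "card F \<le> n" using card_mono[OF _ Fsub] by simp
  then have n2: "n \<ge> 2" using F2 by simp
  have Fne: "F \<noteq> {}" using F2 by auto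
  have zero: "\<exists>i\<in>F. \<not> xx t i" for t
    using exists_zero[of t] cardsum nd k by (metis add_diff_cancel_left' add.assoc order_less_le_trans)
  have noU: "2 * ones n (xx t) \<le> n" for t
  proof (rule ccontr)
    assume "\<not> ?thesis"
    then have U: "2 * ones n (xx t) \<ge> n + 1" by simp
    have inc: "\<exists>t'\<ge>t1. ones n (xx t') \<ge> ones n (xx t1) + 1" if "t \<le> t1" for t1
    proof -
      obtain i where i: "i \<in> F" "\<not> xx t1 i" using zero by blast
      have iln: "i < n" using i Fsub by auto
      obtain t' where t': "t' \<ge> t1" "s!!t' = i" using io iln by blast
      show ?thesis
      proof (cases "xx t' i")
        case True
        have "ones n (xx t1) < ones n (xx t')"
          using ones_strict[OF up_mono[OF U that t'(1)] iln i(2) True] .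
        then show ?thesis using t' by (intro exI[of _ t']) auto
      next
        case False
        have "xx (Suc t') i" using up_step[OF up_persist[OF U, of t']] t' that i by auto
        moreover have "t1 \<le> Suc t'" using t' by simp
        ultimately have "ones n (xx t1) < ones n (xx (Suc t'))"
          using ones_strict[OF up_mono[OF U that] iln i(2)] by blast
        then show ?thesis using t' by (intro exI[of _ "Suc t'"]) auto
      qed
    qed
    have "\<exists>t1\<ge>t. ones n (xx t1) \<ge> j" for j
    proof (induction j)
      case 0 then show ?case by auto
    next
      case (Suc j)
      then obtain t1 where "t1 \<ge> t" "ones n (xx t1) \<ge> j" by blast
      then obtain t1 where t1: "t1 \<ge> t" "ones n (xx t1) \<ge> j" by blast
      obtain t2 where "t2 \<ge> t1" "ones n (xx t2) \<ge> ones n (xx t1) + 1" using inc[OF t1(1)] by blast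
      then have "t2 \<ge> t" "ones n (xx t2) \<ge> Suc j" using t1 by simp_all
      then show ?case by blast
    qed
    then obtain t1 where "ones n (xx t1) \<ge> n + 1" by blast
    then show False using ones_le[of "xx t1"] by simp
  qed
  have "\<exists>t0. 2 * ones n (xx t0) \<le> n - 1"
  proof (rule ccontr)
    assume "\<not> ?thesis"
    then have eq: "2 * ones n (xx t) = n" for t using noU[of t] by (metis diff_Suc_1 le_antisym not_less_eq_eq Suc_pred n2 less_le_trans zero_less_numeral numeral_2_eq_2 le0)
    obtain i where i: "i \<in> F" using Fne by blast
    have iln: "i < n" using i Fsub by auto
    obtain t' where t': "s!!t' = i" using io iln by blast
    show False
    proof (cases "xx t' i")
      case True
      have "\<not> xx (Suc t') i" using Fstep[of t'] t' i True eq[of t'] by auto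
      moreover have "\<forall>j<n. xx (Suc t') j \<longrightarrow> xx t' j" using other[of _ t'] t' \<open>\<not> xx (Suc t') i\<close> by metis
      ultimately have "ones n (xx (Suc t')) < ones n (xx t')" using ones_strict iln True by blast
      then show False using eq[of t'] eq[of "Suc t'"] by linarith
    next
      case False
      have "xx (Suc t') i" using Fstep[of t'] t' i False eq[of t'] by auto
      moreover have "\<forall>j<n. xx t' j \<longrightarrow> xx (Suc t') j" using other[of _ t'] t' False by metis
      ultimately have "ones n (xx t') < ones n (xx (Suc t'))" using ones_strict iln False by blast
      then show False using eq[of t'] eq[of "Suc t'"] by linarith
    qed
  qed
  then obtain t0 where D: "2 * ones n (xx t0) \<le> n - 1" by blast
  have n1: "n \<ge> 1" using n2 by simp
  have "\<forall>i\<in>F. \<exists>t\<ge>t0. s!!t = i" using io Fsub by blast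
  then obtain g where g: "\<And>i. i \<in> F \<Longrightarrow> g i \<ge> t0 \<and> s!!(g i) = i" by metis
  define T0 where "T0 = Suc (Max (g ` F))"
  have all0: "\<not> xx t i" if "i \<in> F" "T0 \<le> t" for i t
  proof -
    have gi: "g i \<le> Max (g ` F)" using finF that by auto
    have "\<not> xx (Suc (g i)) i"
      using down_step[OF down_persist[OF D n1, of "g i"] n1] g[OF that(1)] that(1) by auto
    moreover have "\<forall>j<n. xx t j \<longrightarrow> xx (Suc (g i)) j"
      using down_mono[OF D n1, of "Suc (g i)" t] g[OF that(1)] gi that(2) unfolding T0_def by auto
    ultimately show ?thesis using that Fsub by auto
  qed
  have stab: "T0 \<in> stable_times n xx"
    unfolding stable_times_def
  proof (intro CollectI allI impI)
    fix i t assume "i < n" "T0 \<le> t"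
    then have "i \<in> R \<or> i \<in> C \<or> i \<in> F" using part by auto
    then show "xx t i = xx T0 i" using R_false C_true all0 \<open>T0 \<le> t\<close> by blast
  qed
  then have ne: "stable_times n xx \<noteq> {}" by blast
  define T where "T = Inf (stable_times n xx)"
  have Tin: "T \<in> stable_times n xx" unfolding T_def using ne by (rule Inf_nat_def1)
  have TT0: "T \<le> T0" unfolding T_def using stab by (simp add: cInf_lower)
  have "\<not> xx T i" if "i \<in> F" for i
  proof -
    have "xx T0 i = xx T i" using Tin TT0 that Fsub unfolding stable_times_def by auto
    then show ?thesis using all0[OF that] by auto
  qed
  then show ?thesis using ne unfolding T_def by blast
qed

end



lemma never_null:
  fixes n i :: nat
  assumes "i < n"
  defines "M \<equiv> measure_pmf (pmf_of_set {..<n::nat})"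
  shows "AE s in stream_space M. \<exists>t. s!!t = i"
proof -
  interpret M: prob_space M unfolding M_def by (rule prob_space_measure_pmf)
  interpret S: prob_space "stream_space M" by (rule M.prob_space_stream_space)
  have ne: "{..<n} \<noteq> {}" using assms by auto
  have meas[measurable]: "Measurable.pred (stream_space M) (\<lambda>x. \<forall>t. x!!t \<noteq> i)"
    unfolding M_def by measurable
  define p where "p = S.prob {x\<in>space (stream_space M). \<forall>t. x!!t \<noteq> i}"
  have split: "(\<forall>j. (t ## x)!!j \<noteq> i) = (t \<noteq> i \<and> (\<forall>j. x!!j \<noteq> i))" for t x
    by (auto simp: Stream_snth split: nat.splits)
  have "ennreal p = (\<integral>\<^sup>+t. \<P>(x in stream_space M. \<forall>j. (t ## x)!!j \<noteq> i) \<partial>M)"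
    unfolding p_def by (rule M.prob_stream_space) simp
  also have "\<dots> = (\<integral>\<^sup>+t. ennreal p * indicator (- {i}) t \<partial>M)"
    by (intro nn_integral_cong) (auto simp: split p_def indicator_def)
  also have "\<dots> = ennreal p * emeasure M (- {i})"
    by (rule nn_integral_cmult_indicator) (simp add: M_def)
  also have "emeasure M (- {i}) = ennreal ((n - 1) / n)"
  proof -
    have "{..<n} \<inter> - {i} = {..<n} - {i}" by auto
    then have "card ({..<n} \<inter> - {i}) = n - 1" using assms by simp
    then show ?thesis unfolding M_def using assms
      by (simp add: emeasure_pmf_of_set[OF ne] ennreal_of_nat_eq_real_of_nat divide_ennreal of_nat_diff)
  qed
  finally have e: "ennreal p = ennreal p * ennreal ((n - 1) / n)" .
  have p0: "p \<ge> 0" unfolding p_def by simp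
  have "ennreal p = ennreal (p * ((n - 1) / n))"
    using e p0 by (metis ennreal_mult divide_nonneg_nonneg of_nat_0_le_iff)
  then have "p = p * ((n - 1) / n)"
    using p0 by (subst (asm) ennreal_inj) auto
  then have "p * (1 / n) = 0" using assms by (simp add: field_simps)
  then have "p = 0" using assms by simp
  then have "AE x in stream_space M. x \<notin> {x\<in>space (stream_space M). \<forall>t. x!!t \<noteq> i}"
    unfolding p_def by (subst S.prob_eq_0[symmetric]) simp_all
  then show ?thesis by (auto elim: eventually_mono)
qed

lemma io_ae:
  fixes n :: nat
  assumes "n > 0"
  defines "M \<equiv> measure_pmf (pmf_of_set {..<n::nat})"
  shows "AE s in stream_space M. \<forall>i<n. \<forall>T. \<exists>t\<ge>T. s!!t = i"
proof -
  interpret M: prob_space M unfolding M_def by (rule prob_space_measure_pmf)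
  have "AE s in stream_space M. \<exists>t\<ge>T. s!!t = i" if "i < n" for i T
  proof (induction T)
    case 0 then show ?case using never_null[OF that] unfolding M_def by (auto elim: eventually_mono)
  next
    case (Suc T)
    define P where "P = (\<lambda>s::nat stream. \<exists>t\<ge>Suc T. s!!t = i)"
    have meas: "Measurable.pred (stream_space M) P"
      unfolding M_def P_def by measurable
    have inner: "AE X in stream_space M. P (x ## X)" for x
    proof (rule eventually_mono[OF Suc])
      fix X :: "nat stream"
      assume "\<exists>t\<ge>T. X !! t = i"
      then obtain t where t: "t \<ge> T" "X !! t = i" by (elim exE conjE)
      have "Suc t \<ge> Suc T" using t(1) by simp
      moreover have "(x ## X) !! Suc t = i" using t(2) by simp
      ultimately show "P (x ## X)" unfolding P_def by (intro exI[of _ "Suc t"] conjI)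
    qed
    have "AE X in stream_space M. P X"
      using M.AE_stream_space[OF meas] AE_I2[of M "\<lambda>x. AE X in stream_space M. P (x ## X)"] inner
      by blast
    then show ?case unfolding P_def .
  qed
  then show ?thesis by (simp add: AE_all_countable)
qed


theorem lemma7:
  fixes n k :: nat and R C F :: "nat set"
  assumes "R \<union> C \<union> F = {..<n}"
    and "R \<inter> C = {}" and "R \<inter> F = {}" and "C \<inter> F = {}"
    and "card F \<ge> 2"
    and "card C < k" and "k \<le> n - card R"
  shows "AE \<omega> in game_space n F.
           (\<forall>t. ones n (opinions n R C (fst \<omega>) (snd \<omega>) t) < k) \<longrightarrow>
           (let x = opinions n R C (fst \<omega>) (snd \<omega>);
                T = Inf (stable_times n x)
            in stable_times n x \<noteq> {} \<and> (\<forall>i\<in>F. \<not> x T i))"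
proof -
  define M1 where "M1 = PiM F (\<lambda>_. measure_pmf (bernoulli_pmf (1/2)))"
  define M where "M = measure_pmf (pmf_of_set {..<n})"
  define M2 where "M2 = stream_space M"
  have Fsub: "F \<subseteq> {..<n}" using assms(1) by auto
  have "card F \<le> n" using card_mono[OF _ Fsub] by simp
  then have n0: "n > 0" using assms(5) by simp
  interpret P1: prob_space M1 unfolding M1_def
    by (rule prob_space_PiM) (rule prob_space_measure_pmf)
  interpret PM: prob_space M unfolding M_def by (rule prob_space_measure_pmf)
  interpret P2: prob_space M2 unfolding M2_def by (rule PM.prob_space_stream_space)
  interpret PP: pair_prob_space M1 M2 ..
  have ae: "AE \<omega> in M1 \<Otimes>\<^sub>M M2. \<forall>i<n. \<forall>T. \<exists>t\<ge>T. snd \<omega> !! t = i"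
  proof (rule PP.AE_pair_measure)
    show "{x \<in> space (M1 \<Otimes>\<^sub>M M2). \<forall>i<n. \<forall>T. \<exists>t\<ge>T. snd x !! t = i} \<in> sets (M1 \<Otimes>\<^sub>M M2)"
    proof -
      define Q where "Q = (\<lambda>s::nat stream. \<forall>i<n. \<forall>T. \<exists>t\<ge>T. s !! t = i)"
      have q: "Q \<in> measurable M2 (count_space UNIV)"
        unfolding M2_def M_def Q_def by measurable
      have "(\<lambda>x. Q (snd x)) \<in> measurable (M1 \<Otimes>\<^sub>M M2) (count_space UNIV)"
        using measurable_compose[OF measurable_snd q] .
      then have "{x \<in> space (M1 \<Otimes>\<^sub>M M2). Q (snd x)} \<in> sets (M1 \<Otimes>\<^sub>M M2)"
        by (simp add: pred_def)
      then show ?thesis unfolding Q_def .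
    qed
    show "AE x in M1. AE y in M2. \<forall>i<n. \<forall>T. \<exists>t\<ge>T. snd (x, y) !! t = i"
    proof -
      have h: "AE y in M2. \<forall>i<n. \<forall>T. \<exists>t\<ge>T. y !! t = i"
        using io_ae[OF n0] unfolding M2_def M_def .
      show ?thesis by (rule AE_I2) (simp add: h)
    qed
  qed
  show ?thesis
    unfolding game_space_def
    using ae unfolding M1_def M2_def M_def
  proof (elim eventually_mono, intro impI)
    fix \<omega> :: "(nat \<Rightarrow> bool) \<times> nat stream"
    assume io: "\<forall>i<n. \<forall>T. \<exists>t\<ge>T. snd \<omega> !! t = i"
      and nd: "\<forall>t. ones n (opinions n R C (fst \<omega>) (snd \<omega>) t) < k"
    show "let x = opinions n R C (fst \<omega>) (snd \<omega>); T = Inf (stable_times n x)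
          in stable_times n x \<noteq> {} \<and> (\<forall>i\<in>F. \<not> x T i)"
      using main_det[OF assms(1-4) io nd assms(7) assms(5)] by (simp add: Let_def)
  qed
qed

end
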